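(* Let $v(x,y)=[[x,[x,y]],[y,[x,y]]]\in F_2$, where $[a,b]=aba^{-1}b^{-1}$. Then the word map $v:\mathrm{SL}(2,\mathbb{C})^2\to \mathrm{SL}(2,\mathbb{C})$ is surjective, and consequently the induced word map on $\mathrm{PSL}(2,\mathbb{C})$ is surjective. *)

theory Defs
  imports "HOL-Analysis.Analysis"
begin

definition SL2 :: "(complex^2^2) set" where
  "SL2 = {A. det A = 1}"

text \<open>Group commutator [a,b] = a b a^-1 b^-1 (matrix_inv is the true inverse on SL2).\<close>
definition comm :: "complex^2^2 \<Rightarrow> complex^2^2 \<Rightarrow> complex^2^2" where
  "comm a b = a ** b ** matrix_inv a ** matrix_inv b"

definition vword :: "complex^2^2 \<Rightarrow> complex^2^2 \<Rightarrow> complex^2^2" where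
  "vword x y = comm (comm x (comm x y)) (comm y (comm x y))"

text \<open>PSL(2,C) = SL(2,C)/{\<plusminus>I}: classes of A and B agree iff A = B or A = -B.\<close>
definition psl_eq :: "complex^2^2 \<Rightarrow> complex^2^2 \<Rightarrow> bool" where
  "psl_eq A B \<longleftrightarrow> A = B \<or> A = - B"

end

theory Submission
  imports Defs "HOL-Computational_Algebra.Fundamental_Theorem_Algebra"
begin
definition mk :: "complex \<Rightarrow> complex \<Rightarrow> complex \<Rightarrow> complex \<Rightarrow> complex^2^2" where
  "mk a b c d = (\<chi> i j. if i = 1 then (if j = 1 then a else b) else (if j = 1 then c else d))"

lemma mk_nth [simp]:
  "mk a b c d $ 1 $ 1 = a" "mk a b c d $ 1 $ 2 = b" "mk a b c d $ 2 $ 1 = c" "mk a b c d $ 2 $ 2 = d"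
  by (simp_all add: mk_def)

lemma mk_eta: "A = mk (A$1$1) (A$1$2) (A$2$1) (A$2$2)"
  by (simp add: mk_def vec_eq_iff forall_2)

lemma mk_cases: obtains a b c d where "A = mk a b c d"
  using mk_eta by blast

lemma mk_eq_iff: "mk a b c d = mk a' b' c' d' \<longleftrightarrow> a = a' \<and> b = b' \<and> c = c' \<and> d = d'"
proof
  assume h: "mk a b c d = mk a' b' c' d'"
  have "mk a b c d $1$1 = mk a' b' c' d' $1$1" "mk a b c d $1$2 = mk a' b' c' d' $1$2"
       "mk a b c d $2$1 = mk a' b' c' d' $2$1" "mk a b c d $2$2 = mk a' b' c' d' $2$2"
    using h by simp_all
  then show "a = a' \<and> b = b' \<and> c = c' \<and> d = d'" by simp
qed simp

lemma mk_mult: "mk a b c d ** mk e f g h = mk (a*e+b*g) (a*f+b*h) (c*e+d*g) (c*f+d*h)"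
  by (simp add: mk_def vec_eq_iff forall_2 matrix_matrix_mult_def sum_2)

lemma mk_one: "mat 1 = mk 1 0 0 1"
  by (simp add: mk_def mat_def vec_eq_iff forall_2)

lemma mk_neg: "- mk a b c d = mk (-a) (-b) (-c) (-d)"
  by (simp add: mk_def vec_eq_iff forall_2)

lemma det_mk: "det (mk a b c d) = a*d - b*c"
  by (simp add: det_2)

definition adj :: "complex^2^2 \<Rightarrow> complex^2^2" where
  "adj A = mk (A$2$2) (-(A$1$2)) (-(A$2$1)) (A$1$1)"

lemma adj_mk: "adj (mk a b c d) = mk d (-b) (-c) a"
  by (simp add: adj_def)

lemma adj_right: assumes "det A = 1" shows "A ** adj A = mat 1"
proof -
  obtain a b c d where A: "A = mk a b c d" by (rule mk_cases)
  have d: "a*d - b*c = 1" using assms A by (simp add: det_mk)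
  show ?thesis using d by (simp add: A adj_mk mk_mult mk_one mk_eq_iff algebra_simps)
qed

lemma adj_left: assumes "det A = 1" shows "adj A ** A = mat 1"
proof -
  obtain a b c d where A: "A = mk a b c d" by (rule mk_cases)
  have d: "a*d - b*c = 1" using assms A by (simp add: det_mk)
  show ?thesis using d by (simp add: A adj_mk mk_mult mk_one mk_eq_iff algebra_simps)
qed

lemma inv_det1: assumes "det A = 1" shows "matrix_inv A = adj A"
proof -
  have l: "A ** adj A = mat 1" and r: "adj A ** A = mat 1"
    using assms by (simp_all add: adj_left adj_right)
  have ex: "\<exists>A'. A ** A' = mat 1 \<and> A' ** A = mat 1" using l r by blast
  have m: "A ** matrix_inv A = mat 1 \<and> matrix_inv A ** A = mat 1"
    unfolding matrix_inv_def by (rule someI_ex[OF ex])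
  have "matrix_inv A = (adj A ** A) ** matrix_inv A" using r by simp
  also have "\<dots> = adj A ** (A ** matrix_inv A)" by (simp add: matrix_mul_assoc)
  also have "\<dots> = adj A" using m by simp
  finally show ?thesis .
qed

lemma det_adj: "det (adj A) = det A"
proof -
  obtain a b c d where A: "A = mk a b c d" by (rule mk_cases)
  show ?thesis by (simp add: A adj_mk det_mk algebra_simps)
qed

lemma adj_mult: "adj (A ** B) = adj B ** adj A"
proof -
  obtain a b c d where A: "A = mk a b c d" by (rule mk_cases)
  obtain e f g h where B: "B = mk e f g h" by (rule mk_cases)
  show ?thesis by (simp add: A B mk_mult adj_mk mk_eq_iff algebra_simps)
qed

lemma adj_adj: "adj (adj A) = A"
proof -
  obtain a b c d where A: "A = mk a b c d" by (rule mk_cases)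
  show ?thesis by (simp add: A adj_mk)
qed

lemma comm_det1: assumes "det A = 1" "det B = 1"
  shows "comm A B = A ** B ** adj A ** adj B"
  using assms by (simp add: comm_def inv_det1)

lemma det_comm: assumes "det A = 1" "det B = 1" shows "det (comm A B) = 1"
  using assms by (simp add: comm_det1 det_mul det_adj)

lemma comm_mk: assumes "a*d-b*c=1" "e*h-f*g=1"
  shows "comm (mk a b c d) (mk e f g h) = mk a b c d ** mk e f g h ** mk d (-b) (-c) a ** mk h (-f) (-g) e"
  using assms by (simp add: comm_det1 det_mk adj_mk)

lemma fam0: "vword (mk 1 s 0 1) (mk 0 (-1) 1 0) =
  mk (1 - 12 * s^6 - 14 * s^8 - 4 * s^10) (- 4 * s^3 - 6 * s^5 - 10 * s^7 - 4 * s^9) (4 * s^3 - 2 * s^5 - 6 * s^7 - 2 * s^9) (1 - 4 * s^6 - 2 * s^8)"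
proof -
  have c: "comm (mk 1 s 0 1) (mk 0 (-1) 1 0) = mk (1 + s^2) (s) (s) (1)"
    by (subst comm_mk, simp, simp) (simp add: mk_mult mk_eq_iff, algebra)
  have u: "comm (mk 1 s 0 1) (mk (1 + s^2) (s) (s) (1)) = mk (1 + s^2 + 2 * s^4) (- 3 * s^3 - 2 * s^5) (s^3) (1 - s^2 - s^4)"
    by (subst comm_mk, simp, algebra) (simp add: mk_mult mk_eq_iff, algebra)
  have w: "comm (mk 0 (-1) 1 0) (mk (1 + s^2) (s) (s) (1)) = mk (1 + s^2) (- 2 * s - s^3) (- 2 * s - s^3) (1 + 3 * s^2 + s^4)"
    by (subst comm_mk, simp, algebra) (simp add: mk_mult mk_eq_iff, algebra)
  have v: "comm (mk (1 + s^2 + 2 * s^4) (- 3 * s^3 - 2 * s^5) (s^3) (1 - s^2 - s^4)) (mk (1 + s^2) (- 2 * s - s^3) (- 2 * s - s^3) (1 + 3 * s^2 + s^4))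
     = mk (1 - 12 * s^6 - 14 * s^8 - 4 * s^10) (- 4 * s^3 - 6 * s^5 - 10 * s^7 - 4 * s^9) (4 * s^3 - 2 * s^5 - 6 * s^7 - 2 * s^9) (1 - 4 * s^6 - 2 * s^8)"
    by (subst comm_mk, algebra, algebra) (simp add: mk_mult mk_eq_iff, algebra)
  show ?thesis unfolding vword_def c u w v ..
qed

lemma fam2: "vword (mk 1 s 0 1) (mk 0 (-1) 1 (-2)) =
  mk (1 + 4 * s^4 - 6 * s^5 + 16 * s^6 - 40 * s^7 + 58 * s^8 - 46 * s^9 + 16 * s^10 + 2 * s^11 - 8 * s^12 + 4 * s^13) (- 4 * s^3 - 2 * s^5 + 2 * s^6 + 6 * s^7 - 16 * s^8 + 12 * s^9 - 2 * s^10 + 4 * s^12) (- 4 * s^3 + 12 * s^4 - 10 * s^5 - 8 * s^6 + 26 * s^7 - 24 * s^8 + 10 * s^9 - 4 * s^11 + 2 * s^12) (1 - 4 * s^4 + 6 * s^5 - 8 * s^7 + 6 * s^8 - 2 * s^9 + 2 * s^11)"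
proof -
  have c: "comm (mk 1 s 0 1) (mk 0 (-1) 1 (-2)) = mk (1 + s^2) (s) (s) (1)"
    by (subst comm_mk, simp, simp) (simp add: mk_mult mk_eq_iff, algebra)
  have u: "comm (mk 1 s 0 1) (mk (1 + s^2) (s) (s) (1)) = mk (1 + s^2 + 2 * s^4) (- 3 * s^3 - 2 * s^5) (s^3) (1 - s^2 - s^4)"
    by (subst comm_mk, simp, algebra) (simp add: mk_mult mk_eq_iff, algebra)
  have w: "comm (mk 0 (-1) 1 (-2)) (mk (1 + s^2) (s) (s) (1)) = mk (1 + 2 * s + s^2) (- 2 * s - 2 * s^2 - s^3) (2 * s - s^3) (1 - 2 * s - s^2 + s^4)"
    by (subst comm_mk, simp, algebra) (simp add: mk_mult mk_eq_iff, algebra)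
  have v: "comm (mk (1 + s^2 + 2 * s^4) (- 3 * s^3 - 2 * s^5) (s^3) (1 - s^2 - s^4)) (mk (1 + 2 * s + s^2) (- 2 * s - 2 * s^2 - s^3) (2 * s - s^3) (1 - 2 * s - s^2 + s^4))
     = mk (1 + 4 * s^4 - 6 * s^5 + 16 * s^6 - 40 * s^7 + 58 * s^8 - 46 * s^9 + 16 * s^10 + 2 * s^11 - 8 * s^12 + 4 * s^13) (- 4 * s^3 - 2 * s^5 + 2 * s^6 + 6 * s^7 - 16 * s^8 + 12 * s^9 - 2 * s^10 + 4 * s^12) (- 4 * s^3 + 12 * s^4 - 10 * s^5 - 8 * s^6 + 26 * s^7 - 24 * s^8 + 10 * s^9 - 4 * s^11 + 2 * s^12) (1 - 4 * s^4 + 6 * s^5 - 8 * s^7 + 6 * s^8 - 2 * s^9 + 2 * s^11)"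
    by (subst comm_mk, algebra, algebra) (simp add: mk_mult mk_eq_iff, algebra)
  show ?thesis unfolding vword_def c u w v ..
qed

lemma famm2: "vword (mk (-2) (-1) 1 0) (mk (-1) (-1) 1 0) = mk (-7) (-6) 6 5"
proof -
  have c: "comm (mk (-2) (-1) 1 0) (mk (-1) (-1) 1 0) = mk 3 1 (-1) 0"
    by (subst comm_mk, simp, simp) (simp add: mk_mult mk_eq_iff)
  have u: "comm (mk (-2) (-1) 1 0) (mk 3 1 (-1) 0) = mk (-1) (-5) 1 4"
    by (subst comm_mk, simp, simp) (simp add: mk_mult mk_eq_iff)
  have w: "comm (mk (-1) (-1) 1 0) (mk 3 1 (-1) 0) = mk (-1) (-4) 2 7"
    by (subst comm_mk, simp, simp) (simp add: mk_mult mk_eq_iff)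
  have v: "comm (mk (-1) (-5) 1 4) (mk (-1) (-4) 2 7) = mk (-7) (-6) 6 5"
    by (subst comm_mk, simp, simp) (simp add: mk_mult mk_eq_iff)
  show ?thesis unfolding vword_def c u w v ..
qed

lemma fammI: assumes j: "j * j = -1"
  shows "vword (mk (-1) (-1) 1 0) (mk (1+j) 1 (-j) (-j)) = mk (-1) 0 0 (-1)"
proof -
  have c: "comm (mk (-1) (-1) 1 0) (mk (1+j) 1 (-j) (-j)) = mk (-j) 0 (-1+j) j"
    by (subst comm_mk, simp, use j in algebra) (simp add: mk_mult mk_eq_iff, use j in algebra)
  have u: "comm (mk (-1) (-1) 1 0) (mk (-j) 0 (-1+j) j) = mk 1 (1-j) (-1-j) (-1)"
    by (subst comm_mk, simp, use j in algebra) (simp add: mk_mult mk_eq_iff, use j in algebra)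
  have w: "comm (mk (1+j) 1 (-j) (-j)) (mk (-j) 0 (-1+j) j) = mk j (1+j) 0 (-j)"
    by (subst comm_mk, use j in algebra, use j in algebra) (simp add: mk_mult mk_eq_iff, use j in algebra)
  have v: "comm (mk 1 (1-j) (-1-j) (-1)) (mk j (1+j) 0 (-j)) = mk (-1) 0 0 (-1)"
    by (subst comm_mk, use j in algebra, use j in algebra) (simp add: mk_mult mk_eq_iff, use j in algebra)
  show ?thesis unfolding vword_def c u w v ..
qed

lemma famI: "vword (mk 1 0 0 1) (mk 1 0 0 1) = mk 1 0 0 1"
proof -
  have c: "comm (mk 1 0 0 1) (mk 1 0 0 1) = mk 1 0 0 1"
    by (subst comm_mk, simp, simp) (simp add: mk_mult mk_eq_iff)
  show ?thesis unfolding vword_def c c c ..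
qed

definition cj :: "complex^2^2 \<Rightarrow> complex^2^2 \<Rightarrow> complex^2^2" where
  "cj R A = R ** A ** adj R"

lemma cj_mult: assumes "det R = 1" shows "cj R (A ** B) = cj R A ** cj R B"
proof -
  have "cj R A ** cj R B = R ** A ** (adj R ** R) ** B ** adj R"
    unfolding cj_def by (simp add: matrix_mul_assoc)
  also have "\<dots> = cj R (A ** B)" using adj_left[OF assms]
    unfolding cj_def by (simp add: matrix_mul_assoc)
  finally show ?thesis by simp
qed

lemma adj_cj: "adj (cj R A) = cj R (adj A)"
  unfolding cj_def by (simp add: adj_mult adj_adj matrix_mul_assoc)

lemma det_cj: assumes "det R = 1" shows "det (cj R A) = det A"
  using assms unfolding cj_def by (simp add: det_mul det_adj)

lemma cj_comm: assumes "det R = 1" "det A = 1" "det B = 1"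
  shows "comm (cj R A) (cj R B) = cj R (comm A B)"
  using assms by (simp add: comm_det1 det_cj cj_mult adj_cj)

lemma cj_vword: assumes "det R = 1" "det x = 1" "det y = 1"
  shows "vword (cj R x) (cj R y) = cj R (vword x y)"
  using assms by (simp add: vword_def cj_comm det_comm)

definition comp :: "complex \<Rightarrow> complex^2^2" where
  "comp t = mk 0 (-1) 1 t"

definition nonscalar :: "complex^2^2 \<Rightarrow> bool" where
  "nonscalar A \<longleftrightarrow> \<not> (A$1$2 = 0 \<and> A$2$1 = 0 \<and> A$1$1 = A$2$2)"

definition tr :: "complex^2^2 \<Rightarrow> complex" where
  "tr A = A$1$1 + A$2$2"

lemma scale_conj:
  assumes h: "A ** mk p q v u = mk p q v u ** comp t" and r: "r * r = p * u - q * v" "r \<noteq> 0"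
  shows "A ** (mk p q v u ** mk (1/r) 0 0 (1/r)) = (mk p q v u ** mk (1/r) 0 0 (1/r)) ** comp t"
    "det (mk p q v u ** mk (1/r) 0 0 (1/r)) = 1"
proof -
  have cd: "comp t ** mk (1/r) 0 0 (1/r) = mk (1/r) 0 0 (1/r) ** comp t"
    by (simp add: comp_def mk_mult)
  have "A ** (mk p q v u ** mk (1/r) 0 0 (1/r)) = (A ** mk p q v u) ** mk (1/r) 0 0 (1/r)"
    by (simp add: matrix_mul_assoc)
  also have "\<dots> = mk p q v u ** (comp t ** mk (1/r) 0 0 (1/r))"
    unfolding h by (simp add: matrix_mul_assoc)
  also have "\<dots> = (mk p q v u ** mk (1/r) 0 0 (1/r)) ** comp t"
    unfolding cd by (simp add: matrix_mul_assoc)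
  finally show "A ** (mk p q v u ** mk (1/r) 0 0 (1/r)) = (mk p q v u ** mk (1/r) 0 0 (1/r)) ** comp t" .
  have "det (mk p q v u ** mk (1/r) 0 0 (1/r)) = (p * u - q * v) * ((1/r) * (1/r))"
    by (simp add: det_mul det_mk)
  also have "\<dots> = (r * r) / (r * r)" unfolding r(1)[symmetric] by simp
  also have "\<dots> = 1" using r(2) by simp
  finally show "det (mk p q v u ** mk (1/r) 0 0 (1/r)) = 1" .
qed

lemma companion:
  assumes "det A = 1" "nonscalar A"
  shows "\<exists>P. det P = 1 \<and> A ** P = P ** comp (tr A)"
proof -
  obtain a b c d where A: "A = mk a b c d" by (rule mk_cases)
  have dd: "a*d - b*c = 1" using assms A by (simp add: det_mk)
  have ns: "\<not> (b = 0 \<and> c = 0 \<and> a = d)" using assms(2) A by (simp add: nonscalar_def)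
  have "\<exists>p q v u. p*u - q * v \<noteq> 0 \<and> mk a b c d ** mk p q v u = mk p q v u ** comp (a+d)"
  proof (cases "c = 0")
    case False
    have "mk a b c d ** mk 1 a 0 c = mk 1 a 0 c ** comp (a+d)"
      unfolding comp_def mk_mult mk_eq_iff using dd by algebra
    then show ?thesis using False by (intro exI[of _ 1] exI[of _ a] exI[of _ 0] exI[of _ c]) simp
  next
    case c0: True
    show ?thesis
    proof (cases "b = 0")
      case False
      have "mk a b c d ** mk 0 b 1 d = mk 0 b 1 d ** comp (a+d)"
        unfolding comp_def mk_mult mk_eq_iff using dd by algebra
      then show ?thesis using False by (intro exI[of _ 0] exI[of _ b] exI[of _ 1] exI[of _ d]) simp
    next
      case True
      then have "a \<noteq> d" using ns c0 by simp
      have "mk a b c d ** mk 1 a 1 d = mk 1 a 1 d ** comp (a+d)"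
        unfolding comp_def mk_mult mk_eq_iff using dd c0 True by algebra
      then show ?thesis using \<open>a \<noteq> d\<close> by (intro exI[of _ 1] exI[of _ a] exI[of _ 1] exI[of _ d]) simp
    qed
  qed
  then obtain p q v u where pq: "p*u - q * v \<noteq> 0" "mk a b c d ** mk p q v u = mk p q v u ** comp (a+d)"
    by blast
  define r where "r = csqrt (p*u - q * v)"
  have r: "r * r = p*u - q * v" "r \<noteq> 0" using pq(1) unfolding r_def
    by (simp_all add: power2_eq_square[symmetric])
  have "tr A = a + d" using A by (simp add: tr_def)
  then show ?thesis using scale_conj[OF pq(2)[folded A] r]
    by (intro exI[of _ "mk p q v u ** mk (1/r) 0 0 (1/r)"]) simp
qed

lemma conj_same_trace:
  assumes "det g = 1" "nonscalar g" "det V = 1" "nonscalar V" "tr V = tr g"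
  shows "\<exists>R. det R = 1 \<and> cj R V = g"
proof -
  obtain P where P: "det P = 1" "g ** P = P ** comp (tr g)" using companion assms by blast
  obtain Q where Q: "det Q = 1" "V ** Q = Q ** comp (tr g)" using companion assms by metis
  have aq: "adj Q ** (V ** Q) = comp (tr g)"
  proof -
    have "adj Q ** (V ** Q) = adj Q ** (Q ** comp (tr g))" using Q(2) by simp
    also have "\<dots> = (adj Q ** Q) ** comp (tr g)" by (simp add: matrix_mul_assoc)
    also have "\<dots> = comp (tr g)" using adj_left[OF Q(1)] by simp
    finally show ?thesis .
  qed
  have gp: "(P ** comp (tr g)) ** adj P = g"
  proof -
    have "(P ** comp (tr g)) ** adj P = (g ** P) ** adj P" using P(2) by simp
    also have "\<dots> = g ** (P ** adj P)" by (simp add: matrix_mul_assoc)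
    also have "\<dots> = g" using adj_right[OF P(1)] by simp
    finally show ?thesis .
  qed
  have "cj (P ** adj Q) V = P ** (adj Q ** (V ** Q)) ** adj P"
    unfolding cj_def by (simp add: adj_mult adj_adj matrix_mul_assoc)
  also have "\<dots> = g" unfolding aq using gp .
  finally show ?thesis using P Q by (intro exI[of _ "P ** adj Q"]) (simp add: det_mul det_adj)
qed

lemma scalar_form: assumes "\<not> nonscalar A" shows "A = mk (A$1$1) 0 0 (A$1$1)"
proof -
  have "A = mk (A$1$1) (A$1$2) (A$2$1) (A$2$2)" by (rule mk_eta)
  also have "\<dots> = mk (A$1$1) 0 0 (A$1$1)" using assms by (simp add: nonscalar_def)
  finally show ?thesis .
qed

lemma sq1: "(a::complex) * a = 1 \<Longrightarrow> a = 1 \<or> a = -1"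
proof -
  assume "a * a = 1"
  then have "(a - 1) * (a + 1) = 0" by (simp add: algebra_simps)
  then show ?thesis by (simp add: eq_neg_iff_add_eq_0)
qed

lemma root5: "\<exists>z::complex. z^5 + 2 * z^3 = w"
proof -
  have "\<exists>z. poly [:-w, 0, 0, 2, 0, 1:] z = 0"
    by (rule fundamental_theorem_of_algebra_alt) simp
  then obtain z where z: "poly [:-w, 0, 0, 2, 0, 1:] z = 0" by blast
  have "poly [:-w, 0, 0, 2, 0, 1:] z = z^5 + 2 * z^3 - w"
    by (simp add: eval_nat_numeral algebra_simps)
  then have "z^5 + 2 * z^3 = w" using z by simp
  then show ?thesis by blast
qed

lemma rooth: "\<exists>z::complex. z^5 + 4 * z^2 - 4 * z + 4 = 0"
proof -
  have "\<exists>z. poly [:4, -4, 4, 0, 0, 1:] z = (0::complex)"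
    by (rule fundamental_theorem_of_algebra_alt) simp
  then obtain z where z: "poly [:4, -4, 4, 0, 0, 1:] z = (0::complex)" by blast
  have "poly [:4, -4, 4, 0, 0, 1:] z = z^5 + 4 * z^2 - 4 * z + 4"
    by (simp add: eval_nat_numeral algebra_simps)
  then show ?thesis using z by metis
qed

lemma det_vword: assumes "det x = 1" "det y = 1" shows "det (vword x y) = 1"
  using assms by (simp add: vword_def det_comm)

lemma realize2: "\<exists>x y. det x = 1 \<and> det y = 1 \<and> nonscalar (vword x y) \<and> tr (vword x y) = 2"
proof -
  obtain s :: complex where h: "s^5 + 4 * s^2 - 4 * s + 4 = 0" using rooth by blast
  define V12 where "V12 = - 4 * s^3 - 2 * s^5 + 2 * s^6 + 6 * s^7 - 16 * s^8 + 12 * s^9 - 2 * s^10 + 4 * s^12"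
  define hh where "hh = s^5 + 4 * s^2 - 4 * s + 4"
  have hh0: "hh = 0" using h by (simp add: hh_def)
  have cert: "(500 + 500 * s - 402 * s^3 - 392 * s^4 - 8 * s^5 + 358 * s^6 + 296 * s^7 + 458 * s^8 - 126 * s^9 - 572 * s^10 - 212 * s^11) * hh
     + (98 + 10 * s + 58 * s^2 + 143 * s^3 + 53 * s^4) * V12 = 2000"
    unfolding hh_def V12_def by (simp add: algebra_simps power_numeral_reduce)
  have ns: "V12 \<noteq> 0"
  proof
    assume "V12 = 0"
    then have "(2000::complex) = 0" using cert hh0 by simp
    then show False by simp
  qed
  have trv: "(1 + 4 * s^4 - 6 * s^5 + 16 * s^6 - 40 * s^7 + 58 * s^8 - 46 * s^9 + 16 * s^10 + 2 * s^11 - 8 * s^12 + 4 * s^13) + (1 - 4 * s^4 + 6 * s^5 - 8 * s^7 + 6 * s^8 - 2 * s^9 + 2 * s^11)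
     = 2 + 4 * s^6 * (1 - s)^2 * hh"
    unfolding hh_def by (simp add: algebra_simps power_numeral_reduce)
  have t: "tr (vword (mk 1 s 0 1) (mk 0 (-1) 1 (-2))) = 2"
    unfolding fam2 tr_def mk_nth trv hh0 by simp
  have n: "nonscalar (vword (mk 1 s 0 1) (mk 0 (-1) 1 (-2)))"
    unfolding fam2 nonscalar_def mk_nth using ns unfolding V12_def by blast
  show ?thesis
    by (rule exI[of _ "mk 1 s 0 1"], rule exI[of _ "mk 0 (-1) 1 (-2)"]) (simp add: det_mk t n)
qed

lemma realize: "\<exists>x y. det x = 1 \<and> det y = 1 \<and> nonscalar (vword x y) \<and> tr (vword x y) = t"
proof (cases "t = 2")
  case True
  then show ?thesis using realize2 by simp
next
  case t2: False
  show ?thesis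
  proof (cases "t = -2")
    case True
    have "tr (vword (mk (-2) (-1) 1 0) (mk (-1) (-1) 1 0)) = t"
      unfolding famm2 tr_def mk_nth True by simp
    moreover have "nonscalar (vword (mk (-2) (-1) 1 0) (mk (-1) (-1) 1 0))"
      unfolding famm2 nonscalar_def mk_nth by simp
    ultimately show ?thesis
      by (intro exI[of _ "mk (-2) (-1) 1 0"] exI[of _ "mk (-1) (-1) 1 0"]) (simp add: det_mk)
  next
    case tm2: False
    define w where "w = csqrt ((2 - t) / 4)"
    have w2: "4 * (w * w) = 2 - t" unfolding w_def by (simp add: power2_eq_square[symmetric])
    obtain s :: complex where s: "s^5 + 2 * s^3 = w" using root5 by blast
    let ?x = "mk 1 s 0 1" and ?y = "mk 0 (-1) 1 0"
    have e: "(1 - 12 * s^6 - 14 * s^8 - 4 * s^10) + (1 - 4 * s^6 - 2 * s^8) = 2 - 4 * ((s^5 + 2 * s^3) * (s^5 + 2 * s^3))"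
      by algebra
    have trt: "tr (vword ?x ?y) = t" 
      unfolding fam0 tr_def mk_nth e s using w2 by simp
    have dv: "det (vword ?x ?y) = 1" by (rule det_vword) (simp_all add: det_mk)
    have "nonscalar (vword ?x ?y)"
    proof (rule ccontr)
      assume "\<not> nonscalar (vword ?x ?y)"
      then obtain a where a: "vword ?x ?y = mk a 0 0 a" using scalar_form by blast
      then have "a * a = 1" using dv by (simp add: det_mk)
      then have "a = 1 \<or> a = -1" by (rule sq1)
      moreover have "t = 2 * a" using trt a by (simp add: tr_def)
      ultimately show False using t2 tm2 by auto
    qed
    then show ?thesis using trt dv by (intro exI[of _ ?x] exI[of _ ?y]) (simp add: det_mk)
  qed
qed
lemma SL2_iff: "A \<in> SL2 \<longleftrightarrow> det A = 1"
  by (simp add: SL2_def)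

lemma main_surj: "\<forall>g\<in>SL2. \<exists>x\<in>SL2. \<exists>y\<in>SL2. vword x y = g"
proof
  fix g assume "g \<in> SL2"
  then have dg: "det g = 1" by (simp add: SL2_iff)
  show "\<exists>x\<in>SL2. \<exists>y\<in>SL2. vword x y = g"
  proof (cases "nonscalar g")
    case True
    obtain x y where xy: "det x = 1" "det y = 1" "nonscalar (vword x y)" "tr (vword x y) = tr g"
      using realize by blast
    obtain R where R: "det R = 1" "cj R (vword x y) = g"
      using conj_same_trace[OF dg True det_vword[OF xy(1,2)] xy(3,4)] by blast
    have "vword (cj R x) (cj R y) = g" using cj_vword[OF R(1) xy(1,2)] R(2) by simp
    moreover have "cj R x \<in> SL2" "cj R y \<in> SL2" using xy R by (simp_all add: SL2_iff det_cj)
    ultimately show ?thesis by blast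
  next
    case False
    then obtain a where a: "g = mk a 0 0 a" using scalar_form by blast
    then have "a * a = 1" using dg by (simp add: det_mk)
    then have "a = 1 \<or> a = -1" by (rule sq1)
    then show ?thesis
    proof
      assume "a = 1"
      then show ?thesis using a famI by (intro bexI[of _ "mk 1 0 0 1"]) (auto simp: SL2_iff det_mk)
    next
      assume "a = -1"
      have "vword (mk (-1) (-1) 1 0) (mk (1+\<i>) 1 (-\<i>) (-\<i>)) = g"
        using fammI[of "\<i>"] a \<open>a = -1\<close> by simp
      moreover have "mk (-1) (-1) 1 0 \<in> SL2" "mk (1+\<i>) 1 (-\<i>) (-\<i>) \<in> SL2"
        by (simp_all add: SL2_iff det_mk algebra_simps)
      ultimately show ?thesis by blast
    qed
  qed
qed

theorem theorem9p1:
  shows "(\<forall>g\<in>SL2. \<exists>x\<in>SL2. \<exists>y\<in>SL2. vword x y = g)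
       \<and> (\<forall>g\<in>SL2. \<exists>x\<in>SL2. \<exists>y\<in>SL2. psl_eq (vword x y) g)"
  using main_surj unfolding psl_eq_def by blast

end
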